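(* Let $c>0$ be a constant and $G=G_{n,c/n}$ with vertex set $V=[n]$. Let $b_0=\ln^{1/4}n$ and $V_0=\{v\in V:\deg(v)\ge b_0\}$. Then with high probability there is no set $S\subseteq V_0$ with $|S|\ge \ln^{7/8}n$ such that $G^5[S]$ is connected.
   Context: For a graph $G$ and integer $i\ge1$, $G^i$ is the graph on $V(G)$ in which $u\ne v$ are adjacent iff $d_G(u,v)\le i$. "With high probability" means with probability $\to1$ as $n\to\infty$. *)

theory Defs
  imports "HOL-Probability.Probability"
begin

definition vset :: "nat \<Rightarrow> nat set" where
  "vset n = {1..n}"

definition pairs :: "nat \<Rightarrow> nat set set" where
  "pairs n = {e. e \<subseteq> vset n \<and> card e = 2}"

text \<open>Erdos-Renyi random graph G(n,p): each potential edge is present independently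
  with probability p. A graph is an indicator function on 2-element sets.\<close>
definition gnp :: "nat \<Rightarrow> real \<Rightarrow> (nat set \<Rightarrow> bool) pmf" where
  "gnp n p = Pi_pmf (pairs n) False (\<lambda>_. bernoulli_pmf p)"

definition adj :: "nat \<Rightarrow> (nat set \<Rightarrow> bool) \<Rightarrow> nat \<Rightarrow> nat \<Rightarrow> bool" where
  "adj n E u v \<longleftrightarrow> u \<in> vset n \<and> v \<in> vset n \<and> u \<noteq> v \<and> E {u, v}"

definition degree :: "nat \<Rightarrow> (nat set \<Rightarrow> bool) \<Rightarrow> nat \<Rightarrow> nat" where
  "degree n E v = card {u \<in> vset n. adj n E u v}"

definition dist_le :: "nat \<Rightarrow> (nat set \<Rightarrow> bool) \<Rightarrow> nat \<Rightarrow> nat \<Rightarrow> nat \<Rightarrow> bool" where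
  "dist_le n E i u v \<longleftrightarrow> (\<exists>k\<le>i. (u, v) \<in> {(x, y). adj n E x y} ^^ k)"

definition power_adj :: "nat \<Rightarrow> (nat set \<Rightarrow> bool) \<Rightarrow> nat \<Rightarrow> nat \<Rightarrow> nat \<Rightarrow> bool" where
  "power_adj n E i u v \<longleftrightarrow> u \<in> vset n \<and> v \<in> vset n \<and> u \<noteq> v \<and> dist_le n E i u v"

definition induced_connected :: "(nat \<Rightarrow> nat \<Rightarrow> bool) \<Rightarrow> nat set \<Rightarrow> bool" where
  "induced_connected R S \<longleftrightarrow> S \<noteq> {} \<and>
     (\<forall>u\<in>S. \<forall>v\<in>S. (u, v) \<in> {(x, y). x \<in> S \<and> y \<in> S \<and> R x y}\<^sup>*)"

definition V0 :: "nat \<Rightarrow> (nat set \<Rightarrow> bool) \<Rightarrow> nat set" where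
  "V0 n E = {v \<in> vset n. real (degree n E v) \<ge> ln (real n) powr (1/4)}"

end

theory Submission
  imports Defs "HOL-Real_Asymp.Real_Asymp"
begin


lemma finite_vset[simp]: "finite (vset n)" by (simp add: vset_def)
lemma card_vset[simp]: "card (vset n) = n" by (simp add: vset_def)

lemma finite_pairs[simp]: "finite (pairs n)"
proof -
  have "pairs n \<subseteq> Pow (vset n)" by (auto simp: pairs_def)
  thus ?thesis by (rule finite_subset) simp
qed

lemma prob_all_edges:
  assumes D: "D \<subseteq> pairs n" and p: "0 \<le> p" "p \<le> 1"
  shows "measure_pmf.prob (gnp n p) {E. \<forall>e\<in>D. E e} = p ^ card D"
proof -
  define B where "B = (\<lambda>e. if e \<in> D then {True} else (UNIV::bool set))"
  have "{E. \<forall>e\<in>D. E e} = Pi (pairs n) B"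
    using D by (auto simp: B_def Pi_def)
  hence "measure_pmf.prob (gnp n p) {E. \<forall>e\<in>D. E e} =
     (\<Prod>e\<in>pairs n. measure_pmf.prob (bernoulli_pmf p) (B e))"
    by (simp add: gnp_def measure_Pi_pmf_Pi)
  also have "\<dots> = (\<Prod>e\<in>pairs n. if e \<in> D then p else 1)"
    by (intro prod.cong) (auto simp: B_def p measure_pmf_single)
  also have "\<dots> = p ^ card D"
    using D by (simp add: prod.If_cases Int_absorb1)
  finally show ?thesis .
qed

lemma exp_ge_term: "0 \<le> (x::real) \<Longrightarrow> x ^ m / fact m \<le> exp x"
proof -
  assume x: "0 \<le> x"
  have s: "(\<lambda>n. x ^ n / fact n) sums exp x"
    using exp_converges[of x] by (simp add: divide_inverse scaleR_conv_of_real mult.commute)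
  have "(\<Sum>n\<in>{m}. x ^ n / fact n) \<le> (\<Sum>n. x ^ n / fact n)"
    by (rule sum_le_suminf) (use s x in \<open>auto simp: sums_iff\<close>)
  thus ?thesis using s by (simp add: sums_iff)
qed

lemma adj_edge: "adj n E u v \<Longrightarrow> {u, v} \<in> pairs n \<and> E {u, v}"
  by (auto simp: adj_def pairs_def)

lemma walk_extend:
  assumes "(a, b) \<in> {(x, y). adj n E x y} ^^ j" "a \<in> W" "finite W" "W \<subseteq> vset n"
    "F \<subseteq> {e. e \<subseteq> W}" "F \<subseteq> {e\<in>pairs n. E e}" "card W \<le> card F + 1"
  shows "\<exists>W' F'. W \<subseteq> W' \<and> b \<in> W' \<and> finite W' \<and> W' \<subseteq> vset n \<and> F' \<subseteq> {e. e \<subseteq> W'}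
     \<and> F' \<subseteq> {e\<in>pairs n. E e} \<and> card W' \<le> card F' + 1 \<and> card W' \<le> card W + j"
  using assms(1)
proof (induction j arbitrary: b)
  case 0
  then show ?case using assms by auto
next
  case (Suc j)
  from Suc.prems obtain x where ax: "(a, x) \<in> {(x, y). adj n E x y} ^^ j" and xb: "adj n E x b"
    by (auto elim: relpow_Suc_E)
  from Suc.IH[OF ax] obtain W' F' where IH: "W \<subseteq> W'" "x \<in> W'" "finite W'" "W' \<subseteq> vset n"
    "F' \<subseteq> {e. e \<subseteq> W'}" "F' \<subseteq> {e\<in>pairs n. E e}" "card W' \<le> card F' + 1" "card W' \<le> card W + j"
    by blast
  show ?case
  proof (cases "b \<in> W'")
    case True
    then show ?thesis using IH by (intro exI[of _ W'] exI[of _ F']) auto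
  next
    case False
    have fF: "finite F'" proof (rule finite_subset[OF _ finite_pairs[of n]])
      show "F' \<subseteq> pairs n" using IH(6) by auto
    qed
    have nin: "{x, b} \<notin> F'" using IH(5) False by auto
    have e: "{x, b} \<in> pairs n" "E {x, b}" using adj_edge[OF xb] by auto
    have bv: "b \<in> vset n" using xb by (auto simp: adj_def)
    show ?thesis
      using IH False fF nin e bv
      by (intro exI[of _ "insert b W'"] exI[of _ "insert {x, b} F'"]) auto
  qed
qed

lemma crossing:
  assumes "(a, b) \<in> Q\<^sup>*" "a \<in> T" "b \<notin> T"
  shows "\<exists>x y. (x, y) \<in> Q \<and> x \<in> T \<and> y \<notin> T"
  using assms by (induction rule: rtrancl_induct) auto

lemma grow:
  assumes conn: "induced_connected (power_adj n E 5) S" and fS: "finite S" and Sv: "S \<subseteq> vset n"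
    and k: "1 \<le> k"
  shows "k \<le> card S \<Longrightarrow> \<exists>T W F. T \<subseteq> S \<and> card T = k \<and> T \<subseteq> W \<and> finite W \<and> W \<subseteq> vset n \<and>
     F \<subseteq> {e. e \<subseteq> W} \<and> F \<subseteq> {e\<in>pairs n. E e} \<and> card W \<le> card F + 1 \<and> card W + 4 \<le> 5 * k"
  using k
proof (induction k rule: nat_induct_at_least)
  case base
  then obtain v where v: "v \<in> S" using conn by (auto simp: induced_connected_def)
  show ?case using v Sv
    by (intro exI[of _ "{v}"] exI[of _ "{}"]) auto
next
  case (Suc k)
  then obtain T W F where H: "T \<subseteq> S" "card T = k" "T \<subseteq> W" "finite W" "W \<subseteq> vset n"
     "F \<subseteq> {e. e \<subseteq> W}" "F \<subseteq> {e\<in>pairs n. E e}" "card W \<le> card F + 1" "card W + 4 \<le> 5 * k"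
    by auto
  have "T \<noteq> S" using H(2) Suc by auto
  then obtain y where y: "y \<in> S" "y \<notin> T" using H(1) by auto
  have "T \<noteq> {}" using H(2) Suc by auto
  then obtain t0 where t0: "t0 \<in> T" by auto
  define Q where "Q = {(x, y). x \<in> S \<and> y \<in> S \<and> power_adj n E 5 x y}"
  have "(t0, y) \<in> Q\<^sup>*" using conn t0 H(1) y by (auto simp: induced_connected_def Q_def)
  from crossing[OF this t0 y(2)] obtain x u where xu: "(x, u) \<in> Q" "x \<in> T" "u \<notin> T" by blast
  hence uS: "u \<in> S" and pa: "power_adj n E 5 x u" by (auto simp: Q_def)
  then obtain j where j: "j \<le> 5" "(x, u) \<in> {(x, y). adj n E x y} ^^ j"
    by (auto simp: power_adj_def dist_le_def)
  from walk_extend[OF j(2) _ H(4-8)] xu(2) H(3) obtain W' F' where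
    W': "W \<subseteq> W'" "u \<in> W'" "finite W'" "W' \<subseteq> vset n" "F' \<subseteq> {e. e \<subseteq> W'}"
     "F' \<subseteq> {e\<in>pairs n. E e}" "card W' \<le> card F' + 1" "card W' \<le> card W + j"
    by blast
  have fT: "finite T" using finite_subset[OF H(1) fS] .
  show ?case
  proof (intro exI conjI)
    show "insert u T \<subseteq> S" using uS H(1) by auto
    show "card (insert u T) = Suc k" using fT xu(3) H(2) by simp
    show "insert u T \<subseteq> W'" using W'(1,2) H(3) by auto
    show "card W' + 4 \<le> 5 * Suc k" using W'(8) H(9) j(1) by simp
  qed (use W' in auto)
qed

lemma deg_sum:
  assumes fT: "finite T"
  shows "(\<Sum>v\<in>T. degree n E v) \<le> 2 * card {e\<in>pairs n. E e \<and> e \<inter> T \<noteq> {}}"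
proof -
  define P where "P = {e\<in>pairs n. E e \<and> e \<inter> T \<noteq> {}}"
  have fP: "finite P" unfolding P_def by (rule finite_subset[OF _ finite_pairs[of n]]) auto
  have "(\<Sum>v\<in>T. degree n E v) = card (Sigma T (\<lambda>v. {u\<in>vset n. adj n E u v}))"
    using fT by (simp add: card_SigmaI degree_def)
  also have "\<dots> \<le> card (Sigma P (\<lambda>e. e))"
  proof (rule card_inj_on_le)
    show "inj_on (\<lambda>(v, u). ({u, v}, v)) (Sigma T (\<lambda>v. {u\<in>vset n. adj n E u v}))"
      by (auto simp: inj_on_def doubleton_eq_iff adj_def)
    show "(\<lambda>(v, u). ({u, v}, v)) ` (Sigma T (\<lambda>v. {u\<in>vset n. adj n E u v})) \<subseteq> Sigma P (\<lambda>e. e)"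
      using adj_edge by (fastforce simp: P_def insert_commute)
    show "finite (Sigma P (\<lambda>e. e))"
      using fP by (rule finite_SigmaI) (auto simp: P_def pairs_def intro: finite_subset[OF _ finite_vset])
  qed
  also have "\<dots> = (\<Sum>e\<in>P. card e)" using fP
    by (subst card_SigmaI) (auto simp: P_def pairs_def intro: finite_subset[OF _ finite_vset])
  also have "\<dots> = (\<Sum>e\<in>P. 2)" by (rule sum.cong) (auto simp: P_def pairs_def)
  finally show ?thesis by (simp add: P_def mult.commute)
qed

definition Fam :: "nat \<Rightarrow> nat \<Rightarrow> nat \<Rightarrow> (nat set \<times> nat set set \<times> nat set set) set" where
  "Fam n w m = {(W, F, M). W \<subseteq> vset n \<and> card W = w \<and> F \<subseteq> {e\<in>pairs n. e \<subseteq> W} \<and> card F = w - 1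
     \<and> M \<subseteq> {e\<in>pairs n. e \<inter> W \<noteq> {}} \<and> card M = m \<and> F \<inter> M = {}}"

definition KK :: "nat \<Rightarrow> nat" where "KK n = nat \<lceil>ln (real n) powr (7/8)\<rceil>"
definition mm :: "nat \<Rightarrow> nat" where
  "mm n = nat \<lfloor>real (KK n) * ln (real n) powr (1/4) / 2\<rfloor> - 5 * KK n"

lemma bad_sub:
  assumes S: "S \<subseteq> V0 n E" "real (card S) \<ge> ln (real n) powr (7/8)"
    "induced_connected (power_adj n E 5) S" and n: "n \<ge> 2"
  shows "\<exists>w\<in>{1..5 * KK n}. \<exists>x\<in>Fam n w (mm n). \<forall>e\<in>fst (snd x) \<union> snd (snd x). E e"
proof -
  define K where "K = KK n"
  define b0 where "b0 = ln (real n) powr (1/4)"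
  have Sv: "S \<subseteq> vset n" using S(1) by (auto simp: V0_def)
  have fS: "finite S" using finite_subset[OF Sv finite_vset] .
  have lnpos: "ln (real n) > 0" using n by simp
  have "0 < ln (real n) powr (7/8)" using lnpos by simp
  hence "0 < \<lceil>ln (real n) powr (7/8)\<rceil>" by simp
  hence "0 < K" unfolding K_def KK_def by (subst zero_less_nat_eq)
  hence K1: "1 \<le> K" by simp
  have KS: "K \<le> card S" using S(2) by (simp add: K_def KK_def nat_le_iff ceiling_le_iff)
  obtain T W F where H: "T \<subseteq> S" "card T = K" "T \<subseteq> W" "finite W" "W \<subseteq> vset n"
     "F \<subseteq> {e. e \<subseteq> W}" "F \<subseteq> {e\<in>pairs n. E e}" "card W \<le> card F + 1" "card W + 4 \<le> 5 * K"
    using grow[OF S(3) fS Sv K1 KS] by blast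
  define w where "w = card W"
  have fT: "finite T" using finite_subset[OF H(1) fS] .
  have "T \<noteq> {}" using H(2) K1 by auto
  hence "W \<noteq> {}" using H(3) by auto
  hence w1: "1 \<le> w" using H(4) w_def by (simp add: Suc_le_eq card_gt_0_iff)
  have fF: "finite F" by (rule finite_subset[OF _ finite_pairs[of n]]) (use H(7) in auto)
  obtain F0 where F0: "F0 \<subseteq> F" "card F0 = w - 1"
  proof -
    have "w - 1 \<le> card F" using H(8) w_def by simp
    from obtain_subset_with_card_n[OF this] show ?thesis using that by blast
  qed
  define P where "P = {e\<in>pairs n. E e \<and> e \<inter> T \<noteq> {}}"
  have fP: "finite P" unfolding P_def by (rule finite_subset[OF _ finite_pairs[of n]]) auto
  have "real K * b0 \<le> (\<Sum>v\<in>T. real (degree n E v))"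
  proof -
    have "(\<Sum>v\<in>T. b0) \<le> (\<Sum>v\<in>T. real (degree n E v))"
      by (rule sum_mono) (use H(1) S(1) in \<open>auto simp: V0_def b0_def\<close>)
    thus ?thesis using H(2) by simp
  qed
  also have "\<dots> \<le> 2 * real (card P)"
  proof -
    have "real (\<Sum>v\<in>T. degree n E v) \<le> real (2 * card P)"
      using deg_sum[OF fT, of n E] unfolding P_def by (simp only: of_nat_le_iff)
    thus ?thesis by simp
  qed
  finally have cP: "real K * b0 / 2 \<le> real (card P)" by simp
  have "\<lfloor>real K * b0 / 2\<rfloor> \<le> int (card P)" using cP by (simp add: floor_le_iff)
  hence "nat \<lfloor>real K * b0 / 2\<rfloor> \<le> card P" by (simp add: nat_le_iff)
  hence "mm n \<le> card P - 5 * K" by (simp add: mm_def K_def b0_def)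
  also have "\<dots> \<le> card P - card F0" using F0(2) H(9) w_def by simp
  also have "\<dots> \<le> card (P - F0)" by (rule diff_card_le_card_Diff) (rule finite_subset[OF F0(1) fF])
  finally have mle: "mm n \<le> card (P - F0)" .
  obtain M where M: "M \<subseteq> P - F0" "card M = mm n"
    using obtain_subset_with_card_n[OF mle] by metis
  have "(W, F0, M) \<in> Fam n w (mm n)"
    unfolding Fam_def
  proof (clarsimp, intro conjI)
    show "W \<subseteq> vset n" "card W = w" using H(5) w_def by auto
    show "F0 \<subseteq> {e \<in> pairs n. e \<subseteq> W}" using F0(1) H(6,7) by blast
    show "card F0 = w - Suc 0" using F0(2) by simp
    show "M \<subseteq> {e \<in> pairs n. e \<inter> W \<noteq> {}}" using M(1) H(3) unfolding P_def by blast
    show "card M = mm n" by (rule M(2))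
    show "F0 \<inter> M = {}" using M(1) by blast
  qed
  moreover have "\<forall>e\<in>fst (snd (W, F0, M)) \<union> snd (snd (W, F0, M)). E e"
    using F0(1) H(7) M(1) by (auto simp: P_def)
  moreover have "w \<in> {1..5 * KK n}" using w1 H(9) w_def K_def by simp
  ultimately show ?thesis by blast
qed




lemma choose_le_pow': "(a choose b) \<le> a ^ b"
  using binomial_fact_pow[of a b] fact_ge_1[of b, where 'a=nat] by (metis dual_order.trans mult_le_mono2 nat_mult_1_right)

lemma card_PW: "card {e\<in>pairs n. e \<subseteq> W} \<le> card W * card W" if fW: "finite W"
proof -
  have "{e\<in>pairs n. e \<subseteq> W} \<subseteq> (\<lambda>(a,b). {a,b}) ` (W \<times> W)"
    by (auto simp: pairs_def card_2_iff image_iff)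
  hence "card {e\<in>pairs n. e \<subseteq> W} \<le> card ((\<lambda>(a,b). {a,b}) ` (W \<times> W))"
    by (intro card_mono) (auto simp: fW)
  also have "\<dots> \<le> card (W \<times> W)" by (rule card_image_le) (simp add: fW)
  finally show ?thesis by (simp add: card_cartesian_product)
qed

lemma card_IW: "card {e\<in>pairs n. e \<inter> W \<noteq> {}} \<le> card W * n" if fW: "finite W"
proof -
  have "{e\<in>pairs n. e \<inter> W \<noteq> {}} \<subseteq> (\<lambda>(a,b). {a,b}) ` (W \<times> vset n)"
  proof
    fix e assume e: "e \<in> {e\<in>pairs n. e \<inter> W \<noteq> {}}"
    then obtain a b where ab: "e = {a,b}" "a \<noteq> b" and ev: "e \<subseteq> vset n" by (auto simp: pairs_def card_2_iff)
    show "e \<in> (\<lambda>(a,b). {a,b}) ` (W \<times> vset n)"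
    proof (cases "a \<in> W")
      case True thus ?thesis using ab ev by (auto simp: image_iff)
    next
      case False
      hence "b \<in> W" using e ab by auto
      thus ?thesis using ab ev by (auto simp: image_iff intro!: bexI[of _ "(b,a)"])
    qed
  qed
  hence "card {e\<in>pairs n. e \<inter> W \<noteq> {}} \<le> card ((\<lambda>(a,b). {a,b}) ` (W \<times> vset n))"
    by (intro card_mono) (auto simp: fW)
  also have "\<dots> \<le> card (W \<times> vset n)" by (rule card_image_le) (simp add: fW)
  finally show ?thesis by (simp add: card_cartesian_product)
qed

lemma finite_Fam: "finite (Fam n w m)"
proof (rule finite_subset)
  show "Fam n w m \<subseteq> Pow (vset n) \<times> Pow (pairs n) \<times> Pow (pairs n)"
    by (auto simp: Fam_def)
qed simp

lemma card_Fam_nat: "card (Fam n w m) * fact m \<le> n ^ w * (w * w) ^ (w - 1) * (w * n) ^ m"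
proof -
  define Ws where "Ws = {W. W \<subseteq> vset n \<and> card W = w}"
  define Fs where "Fs = (\<lambda>W. {F. F \<subseteq> {e\<in>pairs n. e \<subseteq> W} \<and> card F = w - 1})"
  define Ms where "Ms = (\<lambda>W. {M. M \<subseteq> {e\<in>pairs n. e \<inter> W \<noteq> {}} \<and> card M = m})"
  have fWs: "finite Ws" unfolding Ws_def by (rule finite_subset[of _ "Pow (vset n)"]) auto
  have fFs: "finite (Fs W)" for W unfolding Fs_def by (rule finite_subset[of _ "Pow (pairs n)"]) auto
  have fMs: "finite (Ms W)" for W unfolding Ms_def by (rule finite_subset[of _ "Pow (pairs n)"]) auto
  have sub: "Fam n w m \<subseteq> Sigma Ws (\<lambda>W. Fs W \<times> Ms W)"
    by (auto simp: Fam_def Ws_def Fs_def Ms_def)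
  have "card (Fam n w m) \<le> card (Sigma Ws (\<lambda>W. Fs W \<times> Ms W))"
    by (rule card_mono[OF _ sub]) (use fWs fFs fMs in auto)
  also have "\<dots> = (\<Sum>W\<in>Ws. card (Fs W) * card (Ms W))"
    using fWs fFs fMs by (simp add: card_cartesian_product)
  finally have "card (Fam n w m) * fact m \<le> (\<Sum>W\<in>Ws. card (Fs W) * card (Ms W)) * fact m"
    by simp
  also have "\<dots> = (\<Sum>W\<in>Ws. card (Fs W) * (card (Ms W) * fact m))"
    by (simp add: sum_distrib_right mult.assoc)
  also have "\<dots> \<le> (\<Sum>W\<in>Ws. (w * w) ^ (w - 1) * (w * n) ^ m)"
  proof (rule sum_mono)
    fix W assume W: "W \<in> Ws"
    hence fW: "finite W" and cW: "card W = w" unfolding Ws_def using finite_subset[OF _ finite_vset] by auto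
    have fP: "finite {e\<in>pairs n. e \<subseteq> W}" by (rule finite_subset[OF _ finite_pairs[of n]]) auto
    have fI: "finite {e\<in>pairs n. e \<inter> W \<noteq> {}}" by (rule finite_subset[OF _ finite_pairs[of n]]) auto
    have "card (Fs W) = card {e\<in>pairs n. e \<subseteq> W} choose (w - 1)"
      unfolding Fs_def by (rule n_subsets[OF fP])
    also have "\<dots> \<le> card {e\<in>pairs n. e \<subseteq> W} ^ (w - 1)" by (rule choose_le_pow')
    also have "\<dots> \<le> (w * w) ^ (w - 1)" by (rule power_mono) (use card_PW[OF fW, of n] cW in auto)
    finally have 1: "card (Fs W) \<le> (w * w) ^ (w - 1)" .
    have "card (Ms W) * fact m = (card {e\<in>pairs n. e \<inter> W \<noteq> {}} choose m) * fact m"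
      unfolding Ms_def by (simp add: n_subsets[OF fI])
    also have "\<dots> \<le> card {e\<in>pairs n. e \<inter> W \<noteq> {}} ^ m" by (rule binomial_fact_pow)
    also have "\<dots> \<le> (w * n) ^ m" by (rule power_mono) (use card_IW[OF fW, of n] cW in auto)
    finally have 2: "card (Ms W) * fact m \<le> (w * n) ^ m" .
    show "card (Fs W) * (card (Ms W) * fact m) \<le> (w * w) ^ (w - 1) * (w * n) ^ m"
      using mult_le_mono[OF 1 2] .
  qed
  also have "\<dots> = card Ws * ((w * w) ^ (w - 1) * (w * n) ^ m)" by simp
  also have "card Ws = n choose w" unfolding Ws_def using n_subsets[OF finite_vset, of n w] by simp
  also have "\<dots> \<le> n ^ w" by (rule choose_le_pow')
  finally show ?thesis by (simp add: mult.assoc mult_right_mono)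
qed

lemma prob_Fam:
  assumes p: "0 \<le> p" "p \<le> 1"
  shows "measure_pmf.prob (gnp n p) (\<Union>x\<in>Fam n w m. {E. \<forall>e\<in>fst (snd x) \<union> snd (snd x). E e})
     \<le> real (card (Fam n w m)) * p ^ (w - 1 + m)"
proof -
  have "measure_pmf.prob (gnp n p) (\<Union>x\<in>Fam n w m. {E. \<forall>e\<in>fst (snd x) \<union> snd (snd x). E e})
     \<le> (\<Sum>x\<in>Fam n w m. measure_pmf.prob (gnp n p) {E. \<forall>e\<in>fst (snd x) \<union> snd (snd x). E e})"
    by (rule measure_pmf.finite_measure_subadditive_finite) (auto simp: finite_Fam)
  also have "\<dots> = (\<Sum>x\<in>Fam n w m. p ^ (w - 1 + m))"
  proof (rule sum.cong[OF refl])
    fix x assume x: "x \<in> Fam n w m"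
    obtain W F M where xe: "x = (W, F, M)" by (cases x) auto
    have FM: "F \<subseteq> pairs n" "M \<subseteq> pairs n" "card F = w - 1" "card M = m" "F \<inter> M = {}"
      using x xe by (auto simp: Fam_def)
    have fF: "finite F" "finite M" using FM finite_subset[OF _ finite_pairs] by blast+
    have "card (F \<union> M) = w - 1 + m" using card_Un_disjoint[OF fF FM(5)] FM by simp
    thus "measure_pmf.prob (gnp n p) {E. \<forall>e\<in>fst (snd x) \<union> snd (snd x). E e} = p ^ (w - 1 + m)"
      using prob_all_edges[of "F \<union> M" n p] FM p xe by simp
  qed
  also have "\<dots> = real (card (Fam n w m)) * p ^ (w - 1 + m)" by simp
  finally show ?thesis .
qed

lemma alg_id:
  assumes n: "(n::real) > 0" and w: "w \<ge> 1"
  shows "n ^ w * (real w * real w) ^ (w - 1) * (real w * n) ^ m * (c / n) ^ (w - 1 + m)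
     = n * (c * (real w)^2) ^ (w - 1) * (c * real w) ^ m"
proof -
  obtain v where v: "w = Suc v" using w by (cases w) auto
  have e1: "n ^ v * (c / n) ^ v = c ^ v" and e2: "n ^ m * (c / n) ^ m = c ^ m"
    using n by (simp_all add: power_divide)
  have nw: "n ^ w = n * n ^ v" and wv: "w - 1 = v" by (simp_all add: v)
  have "n ^ w * (real w * real w) ^ (w - 1) * (real w * n) ^ m * (c / n) ^ (w - 1 + m)
    = n * (n ^ v * (c / n) ^ v) * (n ^ m * (c / n) ^ m) * ((real w * real w) ^ v * real w ^ m)"
    by (simp only: nw wv power_add power_mult_distrib) (simp add: algebra_simps)
  also have "\<dots> = n * c ^ v * c ^ m * ((real w * real w) ^ v * real w ^ m)" by (simp only: e1 e2)
  finally show ?thesis by (simp only: wv power_mult_distrib power2_eq_square) (simp add: algebra_simps)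
qed

lemma card_Fam_real:
  "real (card (Fam n w m)) \<le> real n ^ w * (real w * real w) ^ (w - 1) * (real w * real n) ^ m / fact m"
proof -
  have "real (card (Fam n w m) * fact m) \<le> real (n ^ w * (w * w) ^ (w - 1) * (w * n) ^ m)"
    using card_Fam_nat by (simp only: of_nat_le_iff)
  hence "real (card (Fam n w m)) * fact m \<le> real n ^ w * (real w * real w) ^ (w - 1) * (real w * real n) ^ m"
    by (simp add: of_nat_mult)
  thus ?thesis by (simp add: pos_le_divide_eq)
qed

definition badset :: "nat \<Rightarrow> (nat set \<Rightarrow> bool) set" where
  "badset n = {E. \<exists>S. S \<subseteq> V0 n E \<and> real (card S) \<ge> ln (real n) powr (7/8)
                       \<and> induced_connected (power_adj n E 5) S}"

lemma prob_bad_le: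
  assumes n: "n \<ge> 2" and c: "0 \<le> c" "c \<le> real n"
  shows "measure_pmf.prob (gnp n (c / real n)) (badset n) \<le>
    real (5 * KK n) * (real n * (c * real (5 * KK n)^2 + 1) ^ (5 * KK n) * (c * real (5 * KK n)) ^ mm n / fact (mm n))"
proof -
  define K where "K = KK n"
  define m where "m = mm n"
  define p where "p = c / real n"
  define X where "X = c * real (5 * K)^2 + 1"
  have np: "real n > 0" using n by simp
  have p: "0 \<le> p" "p \<le> 1" using c np by (auto simp: p_def)
  define ev where "ev = (\<lambda>x::nat set \<times> nat set set \<times> nat set set. {E. \<forall>e\<in>fst (snd x) \<union> snd (snd x). E e})"
  have sub: "badset n \<subseteq> (\<Union>w\<in>{1..5 * K}. \<Union>x\<in>Fam n w m. ev x)"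
  proof
    fix E assume "E \<in> badset n"
    then obtain S where S: "S \<subseteq> V0 n E" "real (card S) \<ge> ln (real n) powr (7/8)"
        "induced_connected (power_adj n E 5) S" unfolding badset_def by blast
    from bad_sub[OF S n] obtain w x where "w \<in> {1..5 * KK n}" "x \<in> Fam n w (mm n)"
      "\<forall>e\<in>fst (snd x) \<union> snd (snd x). E e" by blast
    thus "E \<in> (\<Union>w\<in>{1..5 * K}. \<Union>x\<in>Fam n w m. ev x)"
      unfolding ev_def K_def m_def by blast
  qed
  have "measure_pmf.prob (gnp n p) (badset n) \<le> measure_pmf.prob (gnp n p) (\<Union>w\<in>{1..5 * K}. \<Union>x\<in>Fam n w m. ev x)"
    by (rule measure_pmf.finite_measure_mono[OF sub]) simp
  also have "\<dots> \<le> (\<Sum>w\<in>{1..5 * K}. measure_pmf.prob (gnp n p) (\<Union>x\<in>Fam n w m. ev x))"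
    by (rule measure_pmf.finite_measure_subadditive_finite) auto
  also have "\<dots> \<le> (\<Sum>w\<in>{1..5 * K}. real n * X ^ (5 * K) * (c * real (5 * K)) ^ m / fact m)"
  proof (rule sum_mono)
    fix w assume w: "w \<in> {1..5 * K}"
    have "measure_pmf.prob (gnp n p) (\<Union>x\<in>Fam n w m. ev x) \<le> real (card (Fam n w m)) * p ^ (w - 1 + m)"
      unfolding ev_def by (rule prob_Fam[OF p])
    also have "\<dots> \<le> (real n ^ w * (real w * real w) ^ (w - 1) * (real w * real n) ^ m / fact m) * p ^ (w - 1 + m)"
      by (rule mult_right_mono[OF card_Fam_real]) (use p in simp)
    also have "\<dots> = (real n ^ w * (real w * real w) ^ (w - 1) * (real w * real n) ^ m * (c / real n) ^ (w - 1 + m)) / fact m"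
      by (simp add: p_def)
    also have "\<dots> = real n * (c * (real w)^2) ^ (w - 1) * (c * real w) ^ m / fact m"
      using alg_id[OF np, of w m c] w by simp
    also have "\<dots> \<le> real n * X ^ (5 * K) * (c * real (5 * K)) ^ m / fact m"
    proof -
      have wle: "real w \<le> real (5 * K)" using w by simp
      have X1: "1 \<le> X" using c by (simp add: X_def)
      have "(c * (real w)^2) ^ (w - 1) \<le> X ^ (w - 1)"
      proof (rule power_mono)
        have "(real w)^2 \<le> real (5 * K)^2" by (rule power_mono[OF wle]) simp
        hence "c * (real w)^2 \<le> c * real (5 * K)^2" by (rule mult_left_mono) (use c in simp)
        thus "c * (real w)^2 \<le> X" unfolding X_def by linarith
      qed (use c in simp)
      also have "\<dots> \<le> X ^ (5 * K)" by (rule power_increasing) (use w X1 in auto)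
      finally have 1: "(c * (real w)^2) ^ (w - 1) \<le> X ^ (5 * K)" .
      have 2: "(c * real w) ^ m \<le> (c * real (5 * K)) ^ m"
        by (rule power_mono) (use c wle in \<open>auto intro: mult_left_mono\<close>)
      have "(c * (real w)^2) ^ (w - 1) * (c * real w) ^ m \<le> X ^ (5 * K) * (c * real (5 * K)) ^ m"
        by (rule mult_mono[OF 1 2]) (use c X1 in auto)
      hence "real n * ((c * (real w)^2) ^ (w - 1) * (c * real w) ^ m) \<le> real n * (X ^ (5 * K) * (c * real (5 * K)) ^ m)"
        by (rule mult_left_mono) (use np in simp)
      thus ?thesis by (simp add: divide_right_mono mult.assoc)
    qed
    finally show "measure_pmf.prob (gnp n p) (\<Union>x\<in>Fam n w m. ev x) \<le> real n * X ^ (5 * K) * (c * real (5 * K)) ^ m / fact m" .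
  qed
  also have "\<dots> = real (5 * K) * (real n * X ^ (5 * K) * (c * real (5 * K)) ^ m / fact m)" by simp
  finally show ?thesis by (simp add: K_def m_def p_def X_def)
qed

definition gfun :: "real \<Rightarrow> real" where
  "gfun x = 5*(ln x powr (7/8)+1) * x * (25 * ln x * (ln x powr (7/8)+1)^2 + 1) powr (5*(ln x powr (7/8)+1))
     * exp(-(ln (ln x)) * ln x powr (9/8)/32)"

lemma gfun_lim: "(gfun \<longlongrightarrow> 0) at_top"
  unfolding gfun_def by real_asymp

lemma fact_lower: "real m ^ m \<le> exp (real m) * fact m"
proof -
  have "real m ^ m / fact m \<le> exp (real m)" by (rule exp_ge_term) simp
  thus ?thesis by (simp add: divide_le_eq mult.commute)
qed

lemma key_bound:
  assumes n: "n \<ge> 3" and c: "0 \<le> c" "c \<le> ln (real n)" and b: "24 \<le> ln (real n) powr (1/4)"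
    and r: "20 * c * exp 1 \<le> ln (real n) powr (1/8)"
  shows "real (5 * KK n) * (real n * (c * real (5 * KK n)^2 + 1) ^ (5 * KK n) * (c * real (5 * KK n)) ^ mm n / fact (mm n))
      \<le> gfun (real n)"
proof -
  define L where "L = ln (real n)"
  define K where "K = KK n"
  define m where "m = mm n"
  define b0 where "b0 = L powr (1/4)"
  define B where "B = 25 * L * (L powr (7/8)+1)^2 + 1"
  define X where "X = c * real (5 * K)^2 + 1"
  have np: "real n > 0" using n by simp
  have L1: "L \<ge> 1"
  proof -
    have "exp 1 \<le> (3::real)" using exp_le by simp
    also have "\<dots> \<le> real n" using n by simp
    finally show ?thesis unfolding L_def using np by (simp add: ln_ge_iff)
  qed
  have "0 \<le> L powr (7/8)" by (rule powr_ge_zero)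
  hence "-1 < L powr (7/8)" by linarith
  hence x0: "0 \<le> \<lceil>L powr (7/8)\<rceil>" by simp
  have Kc: "real K = of_int \<lceil>L powr (7/8)\<rceil>" unfolding K_def KK_def L_def[symmetric]
    using x0 by simp
  have K_lo: "L powr (7/8) \<le> real K" unfolding Kc by (rule le_of_int_ceiling)
  have K_hi: "real K \<le> L powr (7/8) + 1" unfolding Kc by (rule of_int_ceiling_le_add_one)
  have Lp: "0 < L powr (7/8)" using L1 by simp
  have "1 \<le> L powr (7/8)" by (rule ge_one_powr_ge_zero[OF L1]) simp
  hence rK1: "1 \<le> real K" using K_lo by linarith
  hence K1: "1 \<le> K" by simp
  have b24: "24 \<le> b0" using b unfolding b0_def L_def .
  define A where "A = real K * b0 / 2"
  have "real K * 24 \<le> real K * b0" by (rule mult_left_mono[OF b24]) simp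
  hence A12: "A \<ge> 12 * real K" unfolding A_def by linarith
  have fl: "A - 1 < of_int \<lfloor>A\<rfloor>" "of_int \<lfloor>A\<rfloor> \<le> A" by linarith+
  have Apos: "0 \<le> \<lfloor>A\<rfloor>" using A12 by simp
  have nA: "real (nat \<lfloor>A\<rfloor>) = of_int \<lfloor>A\<rfloor>" using Apos by simp
  have "5 * real K < of_int \<lfloor>A\<rfloor>" using fl(1) A12 rK1 by linarith
  hence "real (5 * K) < real (nat \<lfloor>A\<rfloor>)" unfolding nA by simp
  hence le5: "5 * K \<le> nat \<lfloor>A\<rfloor>" by linarith
  have mA: "m = nat \<lfloor>A\<rfloor> - 5 * K" unfolding m_def mm_def A_def K_def b0_def L_def by simp
  have m_lo: "real m \<ge> real K * b0 / 4"
  proof -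
    have "real m = real (nat \<lfloor>A\<rfloor>) - real (5 * K)" using le5 mA by (simp add: of_nat_diff)
    moreover have "real K * b0 / 4 = A / 2" unfolding A_def by simp
    ultimately show ?thesis using fl nA A12 rK1 by linarith
  qed
  have b0pos: "0 < b0" using b24 by simp
  have "0 < real K * b0 / 4" using rK1 b0pos by simp
  hence mpos: "0 < real m" using m_lo by linarith
  define r where "r = 5 * c * real K * exp 1 / real m"
  have r0: "0 \<le> r" using c mpos by (simp add: r_def)
  have "(c * real (5 * K)) ^ m / fact m \<le> (c * real (5 * K)) ^ m * exp (real m) / real m ^ m"
  proof -
    have fp: "0 < (fact m :: real)" by simp
    have mp: "0 < real m ^ m" using mpos by simp
    have "(c * real (5 * K)) ^ m * real m ^ m \<le> (c * real (5 * K)) ^ m * (exp (real m) * fact m)"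
      by (rule mult_left_mono[OF fact_lower]) (use c in simp)
    thus ?thesis using fp mp by (simp add: divide_le_eq le_divide_eq field_simps)
  qed
  also have "\<dots> = r ^ m"
  proof -
    have "exp (real m) = exp 1 ^ m" by (simp add: exp_of_nat_mult[symmetric])
    thus ?thesis by (simp add: r_def power_divide power_mult_distrib mult.assoc mult.left_commute)
  qed
  also have "\<dots> \<le> (L powr (-1/8)) ^ m"
  proof (rule power_mono[OF _ r0])
    have "r \<le> 5 * c * real K * exp 1 / (real K * b0 / 4)"
      unfolding r_def by (rule divide_left_mono[OF m_lo]) (use c mpos rK1 b0pos in \<open>auto intro!: mult_pos_pos mult_nonneg_nonneg\<close>)
    also have "\<dots> = 20 * c * exp 1 / b0" using K1 by (simp add: field_simps)
    also have "\<dots> \<le> L powr (1/8) / b0" by (rule divide_right_mono) (use r b0pos in \<open>auto simp: L_def\<close>)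
    also have "\<dots> = L powr (-1/8)" using L1 by (simp add: b0_def powr_diff[symmetric])
    finally show "r \<le> L powr (-1/8)" .
  qed
  also have "\<dots> = L powr (-(real m) / 8)" using L1 by (simp add: powr_realpow[symmetric] powr_powr)
  also have "\<dots> \<le> L powr (-(L powr (7/8) * L powr (1/4) / 32))"
  proof (rule powr_mono[OF _ L1])
    have "L powr (7/8) * b0 \<le> real K * b0" by (rule mult_right_mono[OF K_lo]) (use b0pos in simp)
    thus "- real m / 8 \<le> - (L powr (7/8) * L powr (1/4) / 32)" using m_lo mult.commute[of "L powr (1/4)" "L powr (7/8)"] unfolding b0_def by linarith
  qed
  also have "L powr (7/8) * L powr (1/4) = L powr (9/8)"
    by (simp add: powr_add[symmetric])
  also have "L powr (-(L powr (9/8) / 32)) = exp (-(ln L) * L powr (9/8) / 32)"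
    using L1 by (simp add: powr_def mult.commute)
  finally have fac: "(c * real (5 * K)) ^ m / fact m \<le> exp (-(ln L) * L powr (9/8) / 32)" .
  have B1: "1 \<le> B" using L1 unfolding B_def by simp
  have X0: "0 \<le> X" using c by (simp add: X_def)
  have "X \<le> B"
  proof -
    have KK2: "real K ^ 2 \<le> (L powr (7/8) + 1) ^ 2" by (rule power_mono[OF K_hi]) simp
    have "c * real K ^ 2 \<le> L * (L powr (7/8) + 1) ^ 2"
      by (rule mult_mono[OF _ KK2]) (use c in \<open>auto simp: L_def\<close>)
    thus ?thesis unfolding X_def B_def by (simp add: power_mult_distrib)
  qed
  hence "X ^ (5 * K) \<le> B ^ (5 * K)" using X0 by (simp add: power_mono)
  also have "\<dots> = B powr real (5 * K)" by (subst powr_realpow) (use B1 in auto)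
  also have "\<dots> \<le> B powr (5 * (L powr (7/8) + 1))" by (rule powr_mono) (use K_hi B1 in auto)
  finally have Xb: "X ^ (5 * K) \<le> B powr (5 * (L powr (7/8) + 1))" .
  have fiveK: "real (5 * K) \<le> 5 * (L powr (7/8) + 1)" using K_hi by simp
  have "real (5 * K) * (real n * X ^ (5 * K) * ((c * real (5 * K)) ^ m / fact m))
     \<le> (5 * (L powr (7/8) + 1)) * (real n * B powr (5 * (L powr (7/8) + 1)) * exp (-(ln L) * L powr (9/8) / 32))"
  proof (rule mult_mono[OF fiveK])
    show "real n * X ^ (5 * K) * ((c * real (5 * K)) ^ m / fact m) \<le> real n * B powr (5 * (L powr (7/8) + 1)) * exp (-(ln L) * L powr (9/8) / 32)"
      by (rule mult_mono[OF mult_left_mono[OF Xb] fac]) (use np X0 c in auto)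
  qed (use np X0 c in auto)
  thus ?thesis unfolding gfun_def B_def L_def X_def K_def m_def by (simp add: mult.assoc)
qed

lemma ev_ge: "filterlim (f::real \<Rightarrow> real) at_top at_top \<Longrightarrow> eventually (\<lambda>n::nat. C \<le> f (real n)) sequentially"
proof -
  assume f: "filterlim f at_top at_top"
  have "filterlim (\<lambda>n::nat. f (real n)) at_top sequentially"
    by (rule filterlim_compose[OF f filterlim_real_sequentially])
  thus ?thesis by (simp add: filterlim_at_top)
qed

theorem mainTheorem7:
  fixes c :: real
  assumes "c > 0"
  shows "(\<lambda>n. measure_pmf.prob (gnp n (c / real n))
            {E. \<not> (\<exists>S. S \<subseteq> V0 n E \<and> real (card S) \<ge> ln (real n) powr (7/8)
                       \<and> induced_connected (power_adj n E 5) S)})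
         \<longlonglongrightarrow> 1"
proof -
  define Q where "Q = (\<lambda>n. measure_pmf.prob (gnp n (c / real n)) (badset n))"
  have eq: "measure_pmf.prob (gnp n (c / real n))
            {E. \<not> (\<exists>S. S \<subseteq> V0 n E \<and> real (card S) \<ge> ln (real n) powr (7/8)
                       \<and> induced_connected (power_adj n E 5) S)} = 1 - Q n" for n
  proof -
    have "{E. \<not> (\<exists>S. S \<subseteq> V0 n E \<and> real (card S) \<ge> ln (real n) powr (7/8)
                       \<and> induced_connected (power_adj n E 5) S)} = space (measure_pmf (gnp n (c / real n))) - badset n"
      unfolding badset_def by auto
    moreover have "measure_pmf.prob (gnp n (c / real n)) (space (measure_pmf (gnp n (c / real n))) - badset n)
       = 1 - measure_pmf.prob (gnp n (c / real n)) (badset n)"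
      by (rule measure_pmf.prob_compl) simp
    ultimately show ?thesis unfolding Q_def by simp
  qed
  have l1: "filterlim (\<lambda>x::real. ln x) at_top at_top" by (rule ln_at_top)
  have l2: "filterlim (\<lambda>x::real. ln x powr (1/4)) at_top at_top" by real_asymp
  have l3: "filterlim (\<lambda>x::real. ln x powr (1/8)) at_top at_top" by real_asymp
  have ev: "eventually (\<lambda>n. Q n \<le> gfun (real n)) sequentially"
    using eventually_ge_at_top[of 3] ev_ge[OF l1, of c] ev_ge[OF l2, of 24] ev_ge[OF l3, of "20 * c * exp 1"]
  proof eventually_elim
    case (elim n)
    have "ln (real n) \<le> real n - 1" by (rule ln_le_minus_one) (use elim(1) in simp)
    hence "c \<le> real n" using elim(2) by linarith
    hence "Q n \<le> real (5 * KK n) * (real n * (c * real (5 * KK n)^2 + 1) ^ (5 * KK n) * (c * real (5 * KK n)) ^ mm n / fact (mm n))"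
      unfolding Q_def by (intro prob_bad_le) (use elim(1) assms in auto)
    also have "\<dots> \<le> gfun (real n)" by (rule key_bound[OF elim(1) _ elim(2) elim(3) elim(4)]) (use assms in simp)
    finally show ?case .
  qed
  have g0: "(\<lambda>n. gfun (real n)) \<longlonglongrightarrow> 0"
    by (rule filterlim_compose[OF gfun_lim filterlim_real_sequentially])
  have "Q \<longlonglongrightarrow> 0"
    by (rule tendsto_sandwich[OF _ ev tendsto_const g0]) (simp add: Q_def)
  hence "(\<lambda>n. 1 - Q n) \<longlonglongrightarrow> 1 - 0" by (intro tendsto_intros)
  thus ?thesis unfolding eq by simp
qed

end
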